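(* Let $M$ be a multigraph with $n$ vertices. Then $M$ is the double competition multigraph of a loopless digraph if and only if there exist an ordering $(v_1,\ldots,v_n)$ of the vertices of $M$ and a double indexed edge clique partition $\{S_{ij}\mid i,j\in[n]\}$ of $M$ such that the following conditions hold: (I) for any $i,j\in[n]$, if $|A_i\cap B_j|\ge 2$, then $A_i\cap B_j=S_{ij}$; (II) for any $i,j\in[n]$, $v_i\notin S_{ij}$ and $v_j\notin S_{ij}$, where $A_i = S_{i*}\cup T^+_i$, $S_{i*} := \bigcup_{p\in[n]} S_{ip}$, $T^+_i := \{v_b \mid a,b\in[n],\ v_i\in S_{ab}\}$, and $B_j = S_{*j}\cup T^-_j$, $S_{*j} := \bigcup_{q\in[n]} S_{qj}$, $T^-_j := \{v_a \mid a,b\in[n],\ v_j\in S_{ab}\}$.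
   Context: A digraph $D$ is a pair $(V(D),A(D))$ with $A(D)$ a set of ordered pairs of vertices (arcs); an arc $(v,v)$ is a loop, and $D$ is loopless if it has no loops. $N^+_D(x)=\{v\mid (x,v)\in A(D)\}$ and $N^-_D(x)=\{v\mid (v,x)\in A(D)\}$. A multigraph $M$ (without loops) is a vertex set $V(M)$ together with a function $m_M$ assigning to each unordered pair $\{x,y\}$ of distinct vertices a nonnegative integer, the number of edges between $x$ and $y$. The double competition multigraph of a digraph $D$ is the multigraph $M$ with $V(M)=V(D)$ and $m_M(\{x,y\}) = |N^+_D(x)\cap N^+_D(y)|\cdot|N^-_D(x)\cap N^-_D(y)|$ for distinct $x,y$. A clique of $M$ is a set of vertices that are pairwise adjacent (i.e. $m_M\ge 1$ on every pair of distinct elements); the empty set and singletons count as cliques. An edge clique partition of $M$ is a family (multiset) $\mathcal{F}$ of cliques of $M$ such that any two distinct vertices $x,y$ are contained in exactly $m_M(\{x,y\})$ members of $\mathcal{F}$; a double indexed edge clique partition $\{S_{ij}\mid i,j\in[n]\}$ is such a family indexed by pairs $(i,j)\in[n]\times[n]$ (members may be empty). $[n]=\{1,\ldots,n\}$. *)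

theory Defs
  imports Main
begin

text \<open>A multigraph on vertex set V is given by a multiplicity function m on unordered
  pairs, represented as 2-element sets {x,y}. A digraph on V is an arc set Arc \<subseteq> V \<times> V.\<close>

definition out_nbr :: "('a \<times> 'a) set \<Rightarrow> 'a \<Rightarrow> 'a set" where
  "out_nbr Arc x = {v. (x, v) \<in> Arc}"

definition in_nbr :: "('a \<times> 'a) set \<Rightarrow> 'a \<Rightarrow> 'a set" where
  "in_nbr Arc x = {v. (v, x) \<in> Arc}"

definition loopless :: "('a \<times> 'a) set \<Rightarrow> bool" where
  "loopless Arc \<longleftrightarrow> (\<forall>v. (v, v) \<notin> Arc)"

definition is_double_competition_multigraph ::
    "'a set \<Rightarrow> ('a \<times> 'a) set \<Rightarrow> ('a set \<Rightarrow> nat) \<Rightarrow> bool" where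
  "is_double_competition_multigraph V Arc m \<longleftrightarrow>
     (\<forall>x\<in>V. \<forall>y\<in>V. x \<noteq> y \<longrightarrow>
        m {x, y} = card (out_nbr Arc x \<inter> out_nbr Arc y) * card (in_nbr Arc x \<inter> in_nbr Arc y))"

definition is_clique :: "'a set \<Rightarrow> ('a set \<Rightarrow> nat) \<Rightarrow> 'a set \<Rightarrow> bool" where
  "is_clique V m K \<longleftrightarrow> K \<subseteq> V \<and> (\<forall>x\<in>K. \<forall>y\<in>K. x \<noteq> y \<longrightarrow> m {x, y} \<ge> 1)"

definition is_double_indexed_ecp ::
    "'a set \<Rightarrow> ('a set \<Rightarrow> nat) \<Rightarrow> nat \<Rightarrow> (nat \<Rightarrow> nat \<Rightarrow> 'a set) \<Rightarrow> bool" where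
  "is_double_indexed_ecp V m n S \<longleftrightarrow>
     (\<forall>i\<in>{1..n}. \<forall>j\<in>{1..n}. is_clique V m (S i j)) \<and>
     (\<forall>x\<in>V. \<forall>y\<in>V. x \<noteq> y \<longrightarrow>
        card {(i, j). i \<in> {1..n} \<and> j \<in> {1..n} \<and> x \<in> S i j \<and> y \<in> S i j} = m {x, y})"

definition S_row :: "nat \<Rightarrow> (nat \<Rightarrow> nat \<Rightarrow> 'a set) \<Rightarrow> nat \<Rightarrow> 'a set" where
  "S_row n S i = (\<Union>p\<in>{1..n}. S i p)"

definition S_col :: "nat \<Rightarrow> (nat \<Rightarrow> nat \<Rightarrow> 'a set) \<Rightarrow> nat \<Rightarrow> 'a set" where
  "S_col n S j = (\<Union>q\<in>{1..n}. S q j)"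

definition T_plus :: "nat \<Rightarrow> (nat \<Rightarrow> 'a) \<Rightarrow> (nat \<Rightarrow> nat \<Rightarrow> 'a set) \<Rightarrow> nat \<Rightarrow> 'a set" where
  "T_plus n v S i = {v b | a b. a \<in> {1..n} \<and> b \<in> {1..n} \<and> v i \<in> S a b}"

definition T_minus :: "nat \<Rightarrow> (nat \<Rightarrow> 'a) \<Rightarrow> (nat \<Rightarrow> nat \<Rightarrow> 'a set) \<Rightarrow> nat \<Rightarrow> 'a set" where
  "T_minus n v S j = {v a | a b. a \<in> {1..n} \<and> b \<in> {1..n} \<and> v j \<in> S a b}"

definition A_set :: "nat \<Rightarrow> (nat \<Rightarrow> 'a) \<Rightarrow> (nat \<Rightarrow> nat \<Rightarrow> 'a set) \<Rightarrow> nat \<Rightarrow> 'a set" where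
  "A_set n v S i = S_row n S i \<union> T_plus n v S i"

definition B_set :: "nat \<Rightarrow> (nat \<Rightarrow> 'a) \<Rightarrow> (nat \<Rightarrow> nat \<Rightarrow> 'a set) \<Rightarrow> nat \<Rightarrow> 'a set" where
  "B_set n v S j = S_col n S j \<union> T_minus n v S j"

end

theory Submission
  imports Defs
begin

lemma card_img_idx:
  assumes "bij_betw v {1..n} V"
  shows "card (v ` {i\<in>{1..n}. P i}) = card {i\<in>{1..n}. P i}"
proof -
  have "inj_on v {i\<in>{1..n}. P i}"
    by (rule inj_on_subset[OF bij_betw_imp_inj_on[OF assms]]) blast
  then show ?thesis by (rule card_image)
qed

lemma fwd:
  fixes V :: "'a set" and m :: "'a set \<Rightarrow> nat" and n :: nat
  assumes fin: "finite V" and bij: "bij_betw v {1..n} V"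
    and AV: "Arc \<subseteq> V \<times> V" and ll: "loopless Arc" and dc: "is_double_competition_multigraph V Arc m"
  defines "S \<equiv> \<lambda>i j. {z. (z, v i) \<in> Arc \<and> (v j, z) \<in> Arc}"
  shows "is_double_indexed_ecp V m n S \<and>
        (\<forall>i\<in>{1..n}. \<forall>j\<in>{1..n}.
           card (A_set n v S i \<inter> B_set n v S j) \<ge> 2 \<longrightarrow>
           A_set n v S i \<inter> B_set n v S j = S i j) \<and>
        (\<forall>i\<in>{1..n}. \<forall>j\<in>{1..n}. v i \<notin> S i j \<and> v j \<notin> S i j)"
proof (intro conjI)
  have img: "v ` {1..n} = V" using bij by (simp add: bij_betw_def)
  have outeq: "out_nbr Arc x \<inter> out_nbr Arc y = v ` {i\<in>{1..n}. (x, v i) \<in> Arc \<and> (y, v i) \<in> Arc}" for x y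
    using AV img unfolding out_nbr_def by blast
  have ineq: "in_nbr Arc x \<inter> in_nbr Arc y = v ` {j\<in>{1..n}. (v j, x) \<in> Arc \<and> (v j, y) \<in> Arc}" for x y
    using AV img unfolding in_nbr_def by blast
  have prodeq: "{(i, j). i \<in> {1..n} \<and> j \<in> {1..n} \<and> x \<in> S i j \<and> y \<in> S i j}
     = {i\<in>{1..n}. (x, v i) \<in> Arc \<and> (y, v i) \<in> Arc} \<times> {j\<in>{1..n}. (v j, x) \<in> Arc \<and> (v j, y) \<in> Arc}" for x y
    unfolding S_def by auto
  have mval: "m {x, y} = card {(i, j). i \<in> {1..n} \<and> j \<in> {1..n} \<and> x \<in> S i j \<and> y \<in> S i j}"
    if "x \<in> V" "y \<in> V" "x \<noteq> y" for x y
  proof -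
    have "m {x, y} = card (out_nbr Arc x \<inter> out_nbr Arc y) * card (in_nbr Arc x \<inter> in_nbr Arc y)"
      using dc that unfolding is_double_competition_multigraph_def by blast
    also have "\<dots> = card {(i, j). i \<in> {1..n} \<and> j \<in> {1..n} \<and> x \<in> S i j \<and> y \<in> S i j}"
      unfolding outeq ineq card_img_idx[OF bij] prodeq card_cartesian_product ..
    finally show ?thesis .
  qed
  show "is_double_indexed_ecp V m n S"
    unfolding is_double_indexed_ecp_def
  proof (intro conjI ballI impI)
    fix i j assume ij: "i \<in> {1..n}" "j \<in> {1..n}"
    show "is_clique V m (S i j)" unfolding is_clique_def
    proof (intro conjI ballI impI)
      show "S i j \<subseteq> V" using AV unfolding S_def by blast
    next
      fix x y assume xy: "x \<in> S i j" "y \<in> S i j" "x \<noteq> y"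
      have V: "x \<in> V" "y \<in> V" using AV xy unfolding S_def by blast+
      have fin2: "finite ({i\<in>{1..n}. (x, v i) \<in> Arc \<and> (y, v i) \<in> Arc} \<times> {j\<in>{1..n}. (v j, x) \<in> Arc \<and> (v j, y) \<in> Arc})"
        by auto
      have "(i, j) \<in> {i\<in>{1..n}. (x, v i) \<in> Arc \<and> (y, v i) \<in> Arc} \<times> {j\<in>{1..n}. (v j, x) \<in> Arc \<and> (v j, y) \<in> Arc}"
        using ij xy unfolding S_def by auto
      then have "card ({i\<in>{1..n}. (x, v i) \<in> Arc \<and> (y, v i) \<in> Arc} \<times> {j\<in>{1..n}. (v j, x) \<in> Arc \<and> (v j, y) \<in> Arc}) \<noteq> 0"
        using fin2 card_0_eq by blast
      then show "1 \<le> m {x, y}" unfolding mval[OF V xy(3)] prodeq by linarith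
    qed
  next
    fix x y assume "x \<in> V" "y \<in> V" "x \<noteq> y"
    then show "card {(i, j). i \<in> {1..n} \<and> j \<in> {1..n} \<and> x \<in> S i j \<and> y \<in> S i j} = m {x, y}"
      using mval by simp
  qed
  show "\<forall>i\<in>{1..n}. \<forall>j\<in>{1..n}. card (A_set n v S i \<inter> B_set n v S j) \<ge> 2 \<longrightarrow>
           A_set n v S i \<inter> B_set n v S j = S i j"
  proof (intro ballI impI)
    fix i j assume ij: "i \<in> {1..n}" "j \<in> {1..n}"
    have A1: "A_set n v S i \<subseteq> {z. (z, v i) \<in> Arc}"
    proof
      fix z assume "z \<in> A_set n v S i"
      then have "z \<in> S_row n S i \<or> z \<in> T_plus n v S i" by (simp add: A_set_def)
      then show "z \<in> {z. (z, v i) \<in> Arc}"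
      proof
        assume "z \<in> S_row n S i"
        then obtain p where "z \<in> S i p" unfolding S_row_def by blast
        then show ?thesis by (simp add: S_def)
      next
        assume "z \<in> T_plus n v S i"
        then obtain a b where "z = v b" "v i \<in> S a b" unfolding T_plus_def by blast
        then show ?thesis by (simp add: S_def)
      qed
    qed
    have B1: "B_set n v S j \<subseteq> {z. (v j, z) \<in> Arc}"
    proof
      fix z assume "z \<in> B_set n v S j"
      then have "z \<in> S_col n S j \<or> z \<in> T_minus n v S j" by (simp add: B_set_def)
      then show "z \<in> {z. (v j, z) \<in> Arc}"
      proof
        assume "z \<in> S_col n S j"
        then obtain q where "z \<in> S q j" unfolding S_col_def by blast
        then show ?thesis by (simp add: S_def)
      next
        assume "z \<in> T_minus n v S j"
        then obtain a b where "z = v a" "v j \<in> S a b" unfolding T_minus_def by blast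
        then show ?thesis by (simp add: S_def)
      qed
    qed
    have A2: "S i j \<subseteq> A_set n v S i" using ij unfolding A_set_def S_row_def by auto
    have B2: "S i j \<subseteq> B_set n v S j" using ij unfolding B_set_def S_col_def by auto
    have A3: "A_set n v S i \<inter> B_set n v S j \<subseteq> S i j"
    proof
      fix z assume "z \<in> A_set n v S i \<inter> B_set n v S j"
      then have "(z, v i) \<in> Arc" "(v j, z) \<in> Arc" using A1 B1 by blast+
      then show "z \<in> S i j" by (simp add: S_def)
    qed
    show "A_set n v S i \<inter> B_set n v S j = S i j"
      using A2 B2 A3 by blast
  qed
  show "\<forall>i\<in>{1..n}. \<forall>j\<in>{1..n}. v i \<notin> S i j \<and> v j \<notin> S i j"
    using ll unfolding loopless_def S_def by auto
qed

lemma bwd: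
  fixes V :: "'a set" and m :: "'a set \<Rightarrow> nat" and n :: nat
  assumes bij: "bij_betw v {1..n} V" and ecp: "is_double_indexed_ecp V m n S"
    and I: "\<forall>i\<in>{1..n}. \<forall>j\<in>{1..n}.
           card (A_set n v S i \<inter> B_set n v S j) \<ge> 2 \<longrightarrow>
           A_set n v S i \<inter> B_set n v S j = S i j"
    and II: "\<forall>i\<in>{1..n}. \<forall>j\<in>{1..n}. v i \<notin> S i j \<and> v j \<notin> S i j"
  shows "\<exists>Arc. Arc \<subseteq> V \<times> V \<and> loopless Arc \<and> is_double_competition_multigraph V Arc m"
proof -
  define A where "A = A_set n v S"
  define B where "B = B_set n v S"
  define Arc where "Arc = {(x, v i) | x i. i \<in> {1..n} \<and> x \<in> A i}"
  have img: "v ` {1..n} = V" using bij by (simp add: bij_betw_def)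
  have inj: "inj_on v {1..n}" using bij by (simp add: bij_betw_def)
  have SV: "S i j \<subseteq> V" if "i \<in> {1..n}" "j \<in> {1..n}" for i j
    using ecp that unfolding is_double_indexed_ecp_def is_clique_def by blast
  have AV: "A i \<subseteq> V" if "i \<in> {1..n}" for i
    unfolding A_def A_set_def S_row_def T_plus_def using SV img that by blast
  have BV: "B i \<subseteq> V" if "i \<in> {1..n}" for i
    unfolding B_def B_set_def S_col_def T_minus_def using SV img that by blast
  have sw: "v k \<in> A i \<longleftrightarrow> v i \<in> B k" if "i \<in> {1..n}" "k \<in> {1..n}" for i k
  proof
    assume "v k \<in> A i"
    then consider p where "p \<in> {1..n}" "v k \<in> S i p"
      | a b where "a \<in> {1..n}" "b \<in> {1..n}" "v i \<in> S a b" "v k = v b"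
      unfolding A_def A_set_def S_row_def T_plus_def by blast
    then show "v i \<in> B k"
    proof cases
      case 1 then show ?thesis using that unfolding B_def B_set_def T_minus_def by blast
    next
      case 2
      have "b = k" using inj_onD[OF inj 2(4)[symmetric] 2(2) that(2)] .
      then show ?thesis using 2 unfolding B_def B_set_def S_col_def by blast
    qed
  next
    assume "v i \<in> B k"
    then consider q where "q \<in> {1..n}" "v i \<in> S q k"
      | a b where "a \<in> {1..n}" "b \<in> {1..n}" "v k \<in> S a b" "v i = v a"
      unfolding B_def B_set_def S_col_def T_minus_def by blast
    then show "v k \<in> A i"
    proof cases
      case 1 then show ?thesis using that unfolding A_def A_set_def T_plus_def by blast
    next
      case 2
      have "a = i" using inj_onD[OF inj 2(4)[symmetric] 2(1) that(1)] .
      then show ?thesis using 2 unfolding A_def A_set_def S_row_def by blast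
    qed
  qed
  have arc_iff: "(x, v i) \<in> Arc \<longleftrightarrow> x \<in> A i" if "i \<in> {1..n}" for x i
  proof
    assume "(x, v i) \<in> Arc"
    then obtain k where k: "k \<in> {1..n}" "x \<in> A k" "v i = v k" unfolding Arc_def by blast
    have "i = k" using inj_onD[OF inj k(3) that k(1)] .
    then show "x \<in> A i" using k by simp
  next
    assume "x \<in> A i"
    then show "(x, v i) \<in> Arc" unfolding Arc_def using that by blast
  qed
  have arc_out: "(v j, z) \<in> Arc \<longleftrightarrow> z \<in> B j" if "j \<in> {1..n}" for z j
  proof
    assume "(v j, z) \<in> Arc"
    then obtain i where "i \<in> {1..n}" "z = v i" "v j \<in> A i" unfolding Arc_def by blast
    then show "z \<in> B j" using sw that by blast
  next
    assume "z \<in> B j"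
    then have "z \<in> V" using BV[OF that] by blast
    then obtain i where i: "i \<in> {1..n}" "z = v i" using img by blast
    then have "v j \<in> A i" using sw that \<open>z \<in> B j\<close> by blast
    then show "(v j, z) \<in> Arc" using i unfolding Arc_def by blast
  qed
  have ArcV: "Arc \<subseteq> V \<times> V"
  proof
    fix p assume "p \<in> Arc"
    then obtain x i where p: "p = (x, v i)" "i \<in> {1..n}" "x \<in> A i" unfolding Arc_def by blast
    have "x \<in> V" using AV[OF p(2)] p(3) by blast
    moreover have "v i \<in> V" using img p(2) by blast
    ultimately show "p \<in> V \<times> V" using p(1) by simp
  qed
  have finV: "finite V" using bij_betw_finite[OF bij] by simp
  have ll: "loopless Arc" unfolding loopless_def
  proof
    fix w show "(w, w) \<notin> Arc"
    proof
      assume "(w, w) \<in> Arc"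
      then obtain i where i: "i \<in> {1..n}" "w = v i" "v i \<in> A i" unfolding Arc_def by blast
      then consider p where "p \<in> {1..n}" "v i \<in> S i p"
        | a b where "a \<in> {1..n}" "b \<in> {1..n}" "v i \<in> S a b" "v i = v b"
        unfolding A_def A_set_def S_row_def T_plus_def by blast
      then show False
      proof cases
        case 1 then show ?thesis using II i by blast
      next
        case 2
        have "b = i" using inj_onD[OF inj 2(4)[symmetric] 2(2) i(1)] .
        then show ?thesis using 2 II by blast
      qed
    qed
  qed
  have dc: "is_double_competition_multigraph V Arc m"
    unfolding is_double_competition_multigraph_def
  proof (intro ballI impI)
    fix x y assume xy: "x \<in> V" "y \<in> V" "x \<noteq> y"
    have o: "out_nbr Arc x \<inter> out_nbr Arc y = v ` {i\<in>{1..n}. x \<in> A i \<and> y \<in> A i}"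
    proof (rule set_eqI)
      fix w
      show "w \<in> out_nbr Arc x \<inter> out_nbr Arc y \<longleftrightarrow> w \<in> v ` {i\<in>{1..n}. x \<in> A i \<and> y \<in> A i}"
      proof
        assume w: "w \<in> out_nbr Arc x \<inter> out_nbr Arc y"
        then have "(x, w) \<in> Arc" "(y, w) \<in> Arc" unfolding out_nbr_def by auto
        then have "w \<in> V" using ArcV by blast
        then obtain i where i: "i \<in> {1..n}" "w = v i" using img by blast
        have "x \<in> A i" "y \<in> A i" using arc_iff[OF i(1)] i(2) \<open>(x, w) \<in> Arc\<close> \<open>(y, w) \<in> Arc\<close> by auto
        then show "w \<in> v ` {i\<in>{1..n}. x \<in> A i \<and> y \<in> A i}" using i by blast
      next
        assume "w \<in> v ` {i\<in>{1..n}. x \<in> A i \<and> y \<in> A i}"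
        then obtain i where i: "i \<in> {1..n}" "w = v i" "x \<in> A i" "y \<in> A i" by blast
        then show "w \<in> out_nbr Arc x \<inter> out_nbr Arc y" using arc_iff[OF i(1)] unfolding out_nbr_def by auto
      qed
    qed
    have ii: "in_nbr Arc x \<inter> in_nbr Arc y = v ` {j\<in>{1..n}. x \<in> B j \<and> y \<in> B j}"
    proof (rule set_eqI)
      fix w
      show "w \<in> in_nbr Arc x \<inter> in_nbr Arc y \<longleftrightarrow> w \<in> v ` {j\<in>{1..n}. x \<in> B j \<and> y \<in> B j}"
      proof
        assume w: "w \<in> in_nbr Arc x \<inter> in_nbr Arc y"
        then have "(w, x) \<in> Arc" "(w, y) \<in> Arc" unfolding in_nbr_def by auto
        then have "w \<in> V" using ArcV by blast
        then obtain i where i: "i \<in> {1..n}" "w = v i" using img by blast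
        have "x \<in> B i" "y \<in> B i" using arc_out[OF i(1)] i(2) \<open>(w, x) \<in> Arc\<close> \<open>(w, y) \<in> Arc\<close> by auto
        then show "w \<in> v ` {j\<in>{1..n}. x \<in> B j \<and> y \<in> B j}" using i by blast
      next
        assume "w \<in> v ` {j\<in>{1..n}. x \<in> B j \<and> y \<in> B j}"
        then obtain i where i: "i \<in> {1..n}" "w = v i" "x \<in> B i" "y \<in> B i" by blast
        then show "w \<in> in_nbr Arc x \<inter> in_nbr Arc y" using arc_out[OF i(1)] unfolding in_nbr_def by auto
      qed
    qed
    have pe: "{i\<in>{1..n}. x \<in> A i \<and> y \<in> A i} \<times> {j\<in>{1..n}. x \<in> B j \<and> y \<in> B j}
      = {(i, j). i \<in> {1..n} \<and> j \<in> {1..n} \<and> x \<in> S i j \<and> y \<in> S i j}"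
    proof (rule set_eqI, clarify)
      fix i j
      have "x \<in> A i \<inter> B j \<and> y \<in> A i \<inter> B j \<longleftrightarrow> x \<in> S i j \<and> y \<in> S i j"
        if ij: "i \<in> {1..n}" "j \<in> {1..n}"
      proof
        assume h: "x \<in> A i \<inter> B j \<and> y \<in> A i \<inter> B j"
        have "finite (A i \<inter> B j)" using finite_subset[OF _ finV] AV[OF ij(1)] by blast
        moreover have "{x, y} \<subseteq> A i \<inter> B j" using h by blast
        ultimately have "card {x, y} \<le> card (A i \<inter> B j)" by (rule card_mono)
        moreover have "card {x, y} = 2" using xy(3) by simp
        ultimately have "card (A i \<inter> B j) \<ge> 2" by simp
        then have "A i \<inter> B j = S i j" using I ij unfolding A_def B_def by blast
        then show "x \<in> S i j \<and> y \<in> S i j" using h by blast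
      next
        assume "x \<in> S i j \<and> y \<in> S i j"
        moreover have "S i j \<subseteq> A i" "S i j \<subseteq> B j"
          using ij unfolding A_def B_def A_set_def B_set_def S_row_def S_col_def by auto
        ultimately show "x \<in> A i \<inter> B j \<and> y \<in> A i \<inter> B j" by blast
      qed
      then show "((i, j) \<in> {i\<in>{1..n}. x \<in> A i \<and> y \<in> A i} \<times> {j\<in>{1..n}. x \<in> B j \<and> y \<in> B j})
        = ((i, j) \<in> {(i, j). i \<in> {1..n} \<and> j \<in> {1..n} \<and> x \<in> S i j \<and> y \<in> S i j})"
        by auto
    qed
    have "m {x, y} = card {(i, j). i \<in> {1..n} \<and> j \<in> {1..n} \<and> x \<in> S i j \<and> y \<in> S i j}"
      using ecp xy unfolding is_double_indexed_ecp_def by simp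
    also have "\<dots> = card (out_nbr Arc x \<inter> out_nbr Arc y) * card (in_nbr Arc x \<inter> in_nbr Arc y)"
      unfolding o ii card_img_idx[OF bij] pe[symmetric] card_cartesian_product ..
    finally show "m {x, y} = card (out_nbr Arc x \<inter> out_nbr Arc y) * card (in_nbr Arc x \<inter> in_nbr Arc y)" .
  qed
  show ?thesis using ArcV ll dc by blast
qed

theorem theorem2:
  fixes V :: "'a set" and m :: "'a set \<Rightarrow> nat" and n :: nat
  assumes "finite V" and "card V = n"
  shows "(\<exists>Arc. Arc \<subseteq> V \<times> V \<and> loopless Arc \<and> is_double_competition_multigraph V Arc m)
     \<longleftrightarrow>
     (\<exists>(v :: nat \<Rightarrow> 'a) (S :: nat \<Rightarrow> nat \<Rightarrow> 'a set).
        bij_betw v {1..n} V \<and> is_double_indexed_ecp V m n S \<and>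
        (\<forall>i\<in>{1..n}. \<forall>j\<in>{1..n}.
           card (A_set n v S i \<inter> B_set n v S j) \<ge> 2 \<longrightarrow>
           A_set n v S i \<inter> B_set n v S j = S i j) \<and>
        (\<forall>i\<in>{1..n}. \<forall>j\<in>{1..n}. v i \<notin> S i j \<and> v j \<notin> S i j))"
proof
  assume "\<exists>Arc. Arc \<subseteq> V \<times> V \<and> loopless Arc \<and> is_double_competition_multigraph V Arc m"
  then obtain Arc where h: "Arc \<subseteq> V \<times> V" "loopless Arc" "is_double_competition_multigraph V Arc m" by blast
  obtain v where bij: "bij_betw v {1..n} V" using ex_bij_betw_nat_finite_1[OF assms(1)] assms(2) by blast
  show "\<exists>(v :: nat \<Rightarrow> 'a) (S :: nat \<Rightarrow> nat \<Rightarrow> 'a set).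
        bij_betw v {1..n} V \<and> is_double_indexed_ecp V m n S \<and>
        (\<forall>i\<in>{1..n}. \<forall>j\<in>{1..n}.
           card (A_set n v S i \<inter> B_set n v S j) \<ge> 2 \<longrightarrow>
           A_set n v S i \<inter> B_set n v S j = S i j) \<and>
        (\<forall>i\<in>{1..n}. \<forall>j\<in>{1..n}. v i \<notin> S i j \<and> v j \<notin> S i j)"
    apply (rule exI[of _ v])
    apply (rule exI[of _ "\<lambda>i j. {z. (z, v i) \<in> Arc \<and> (v j, z) \<in> Arc}"])
    by (rule conjI[OF bij fwd[OF assms(1) bij h]])
next
  assume "\<exists>(v :: nat \<Rightarrow> 'a) (S :: nat \<Rightarrow> nat \<Rightarrow> 'a set).
        bij_betw v {1..n} V \<and> is_double_indexed_ecp V m n S \<and>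
        (\<forall>i\<in>{1..n}. \<forall>j\<in>{1..n}.
           card (A_set n v S i \<inter> B_set n v S j) \<ge> 2 \<longrightarrow>
           A_set n v S i \<inter> B_set n v S j = S i j) \<and>
        (\<forall>i\<in>{1..n}. \<forall>j\<in>{1..n}. v i \<notin> S i j \<and> v j \<notin> S i j)"
  then obtain v :: "nat \<Rightarrow> 'a" and S :: "nat \<Rightarrow> nat \<Rightarrow> 'a set" where
    h: "bij_betw v {1..n} V" "is_double_indexed_ecp V m n S"
       "\<forall>i\<in>{1..n}. \<forall>j\<in>{1..n}.
           card (A_set n v S i \<inter> B_set n v S j) \<ge> 2 \<longrightarrow>
           A_set n v S i \<inter> B_set n v S j = S i j"
       "\<forall>i\<in>{1..n}. \<forall>j\<in>{1..n}. v i \<notin> S i j \<and> v j \<notin> S i j"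
    by blast
  show "\<exists>Arc. Arc \<subseteq> V \<times> V \<and> loopless Arc \<and> is_double_competition_multigraph V Arc m"
    by (rule bwd[OF h])
qed

end
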